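(* Let $\lambda_0\in(0,1/2)$ and let $\nu$ be uniformly distributed on $[0,\pi]$, $n_1=\cos\nu$. Then $$E\left[|n_1|\arctan\left(\frac{4\lambda_0|n_1|}{4\lambda_0^2-1}\right)\right]=-2\lambda_0.$$
   Context: $\arctan$ denotes the principal branch with values in $(-\pi/2,\pi/2)$. *)

theory Defs
  imports "HOL-Analysis.Analysis"
begin

end

theory Submission
  imports Defs
begin
lemma alg_aux:
  fixes S C s c :: real
  assumes sc: "S\<^sup>2 + C\<^sup>2 = 1" and s: "s\<^sup>2 = 1 + c\<^sup>2"
    and D: "s*C\<^sup>2 + S\<^sup>2 > 0"
  shows "inverse (1 + ((s - 1) * S * C / (s * C\<^sup>2 + S\<^sup>2))\<^sup>2) *
      ((((0 * S + C * 1 * (s - 1)) * C + - S * 1 * ((s - 1) * S)) * (s * C\<^sup>2 + S\<^sup>2) -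
      (s - 1) * S * C * (0 * C\<^sup>2 + real 2 * (- S * 1 * C ^ (2 - Suc 0)) * s +
       real 2 * (C * 1 * S ^ (2 - Suc 0)))) /
     ((s * C\<^sup>2 + S\<^sup>2) * (s * C\<^sup>2 + S\<^sup>2))) = 1 - s / (1 + c\<^sup>2 * C\<^sup>2)"
proof -
  define D where "D = s*C\<^sup>2 + S\<^sup>2"
  define N where "N = ((C * (s - 1)) * C - S * ((s - 1) * S)) * D - (s - 1) * S * C * (2 * (- S * C) * s + 2 * (C * S))"
  have E: "1 + c\<^sup>2*C\<^sup>2 > 0" by (simp add: add_pos_nonneg)
  have N: "N = 1 + c\<^sup>2*C\<^sup>2 - s" unfolding N_def D_def using sc s by algebra
  have U: "D\<^sup>2 + ((s-1)*S*C)\<^sup>2 = 1 + c\<^sup>2*C\<^sup>2" unfolding D_def using sc s by algebra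
  have A: "1 + ((s - 1) * S * C / D)\<^sup>2 = (1 + c\<^sup>2*C\<^sup>2) / D\<^sup>2"
    using D U unfolding D_def[symmetric] by (simp add: field_simps)
  have B: "((((0 * S + C * 1 * (s - 1)) * C + - S * 1 * ((s - 1) * S)) * D -
      (s - 1) * S * C * (0 * C\<^sup>2 + real 2 * (- S * 1 * C ^ (2 - Suc 0)) * s +
       real 2 * (C * 1 * S ^ (2 - Suc 0)))) / (D * D)) = N / D\<^sup>2"
    unfolding N_def by (simp add: power2_eq_square)
  have "inverse ((1 + c\<^sup>2*C\<^sup>2) / D\<^sup>2) * (N / D\<^sup>2) = 1 - s / (1 + c\<^sup>2 * C\<^sup>2)"
  proof -
    define K where "K = 1 + c\<^sup>2*C\<^sup>2"
    have "K > 0" "D\<^sup>2 > 0" using D E K_def D_def by auto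
    then have "inverse (K / D\<^sup>2) * ((K - s) / D\<^sup>2) = 1 - s / K"
      by (simp add: field_simps)
    then show ?thesis unfolding N K_def .
  qed
  then show ?thesis unfolding D_def[symmetric] A B .
qed

lemma Hderiv:
  fixes s c x :: real
  assumes s: "s\<^sup>2 = 1 + c\<^sup>2" "s \<ge> 1"
  shows "((\<lambda>x. arctan ((s - 1) * sin x * cos x/(s*(cos x)\<^sup>2 + (sin x)\<^sup>2))) has_real_derivative
           1 - s/(1 + c\<^sup>2*(cos x)\<^sup>2)) (at x)"
proof -
  have D: "s*(cos y)\<^sup>2 + (sin y)\<^sup>2 > 0" for y
  proof -
    have "(cos y)\<^sup>2 \<le> s*(cos y)\<^sup>2"
      using s mult_right_mono[of 1 s "(cos y)\<^sup>2"] by simp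
    moreover have "(cos y)\<^sup>2 + (sin y)\<^sup>2 = 1" by simp
    ultimately show ?thesis by (smt (verit) zero_le_power2)
  qed
  show ?thesis
    apply (rule derivative_eq_intros refl)+
    using D[of x] apply simp
    apply (rule refl)
    apply (rule alg_aux)
    using D[of x] s by simp_all
qed

lemma Gderiv:
  fixes s c x :: real
  assumes s: "s\<^sup>2 = 1 + c\<^sup>2" "s \<ge> 1" and c: "c \<noteq> 0"
  shows "((\<lambda>x. sin x * arctan (c * cos x) + ((s - 1) * x - s * arctan ((s - 1) * sin x * cos x/(s*(cos x)\<^sup>2 + (sin x)\<^sup>2))) / c)
     has_real_derivative cos x * arctan (c * cos x)) (at x)"
proof -
  have K: "1 + c\<^sup>2*(cos x)\<^sup>2 > 0" by (simp add: add_pos_nonneg)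
  have K2: "1 + (c * cos x)\<^sup>2 = 1 + c\<^sup>2*(cos x)\<^sup>2" by (simp add: power_mult_distrib)
  have eq: "cos x * arctan (c * cos x) + sin x * (inverse (1 + (c * cos x)\<^sup>2) * (c * - sin x))
      + ((s - 1) * 1 - s * (1 - s/(1 + c\<^sup>2*(cos x)\<^sup>2))) / c = cos x * arctan (c * cos x)"
  proof -
    define K where "K = 1 + c\<^sup>2*(cos x)\<^sup>2"
    have Kp: "K > 0" using K K_def by simp
    have e1: "(s - 1) * 1 - s * (1 - s/K) = c\<^sup>2*(sin x)\<^sup>2/K"
    proof -
      have "(s - 1) * 1 - s * (1 - s/K) = (s\<^sup>2 - K)/K" using Kp by (simp add: field_simps power2_eq_square)
      also have "s\<^sup>2 - K = c\<^sup>2*(sin x)\<^sup>2" unfolding s(1) K_def using sin_cos_squared_add[of x] by algebra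
      finally show ?thesis .
    qed
    have e2: "sin x * (inverse (1 + (c * cos x)\<^sup>2) * (c * - sin x)) = - c * (sin x)\<^sup>2 / K"
      unfolding K2 K_def[symmetric] by (simp add: field_simps power2_eq_square)
    have "sin x * (inverse (1 + (c * cos x)\<^sup>2) * (c * - sin x))
      + ((s - 1) * 1 - s * (1 - s/(1 + c\<^sup>2*(cos x)\<^sup>2))) / c = 0"
      unfolding K_def[symmetric] e1 e2 using c Kp by (simp add: field_simps power2_eq_square)
    then show ?thesis by simp
  qed
  have d1: "((\<lambda>z. sin z * arctan (c*cos z)) has_real_derivative cos x * arctan (c * cos x) + sin x * (inverse (1 + (c * cos x)\<^sup>2) * (c * - sin x))) (at x)"
    by (rule derivative_eq_intros refl)+ simp
  have d2: "((\<lambda>z. ((s - 1) * z - s * arctan ((s - 1) * sin z * cos z/(s*(cos z)\<^sup>2 + (sin z)\<^sup>2))) / c) has_real_derivative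
     ((s - 1) * 1 - s * (1 - s/(1 + c\<^sup>2*(cos x)\<^sup>2))) / c) (at x)"
    by (intro DERIV_cdivide DERIV_diff DERIV_cmult Hderiv[OF s] DERIV_ident)
  show ?thesis
    using DERIV_add[OF d1 d2] unfolding eq by (simp add: add.assoc)
qed

theorem lemma8:
  fixes lambda0 :: real
  assumes "0 < lambda0" and "lambda0 < 1/2"
  shows "(\<integral>\<nu>. \<bar>cos \<nu>\<bar> * arctan (4 * lambda0 * \<bar>cos \<nu>\<bar> / (4 * lambda0\<^sup>2 - 1))
            \<partial>(uniform_measure lborel {0..pi})) = - 2 * lambda0"
proof -
  define c where "c = 4 * lambda0 / (4 * lambda0\<^sup>2 - 1)"
  define s where "s = (1 + 4 * lambda0\<^sup>2) / (1 - 4 * lambda0\<^sup>2)"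
  have d: "1 - 4 * lambda0\<^sup>2 > 0"
  proof -
    have "lambda0\<^sup>2 < (1/2)\<^sup>2" using assms by (intro power_strict_mono) auto
    then show ?thesis by (simp add: power2_eq_square)
  qed
  have c0: "c \<noteq> 0" using assms d unfolding c_def by auto
  have s1: "s \<ge> 1" using d unfolding s_def by (simp add: field_simps)
  have s2: "s\<^sup>2 = 1 + c\<^sup>2"
  proof -
    have e: "(4 * lambda0\<^sup>2 - 1)\<^sup>2 = (1 - 4 * lambda0\<^sup>2)\<^sup>2" by algebra
    have nz: "(1 - 4 * lambda0\<^sup>2)\<^sup>2 \<noteq> 0" using d by simp
    have "(1 + 4 * lambda0\<^sup>2)\<^sup>2 = (1 - 4 * lambda0\<^sup>2)\<^sup>2 + (4*lambda0)\<^sup>2" by algebra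
    then show ?thesis unfolding s_def c_def power_divide e using nz by (simp add: field_simps)
  qed
  define f where "f = (\<lambda>x. cos x * arctan (c * cos x))"
  have feq: "\<bar>cos x\<bar> * arctan (4 * lambda0 * \<bar>cos x\<bar> / (4 * lambda0\<^sup>2 - 1)) = f x" for x
    unfolding f_def c_def by (cases "cos x \<ge> 0") (auto simp: arctan_minus)
  define G where "G = (\<lambda>x. sin x * arctan (c * cos x) + ((s - 1) * x - s * arctan ((s - 1) * sin x * cos x/(s*(cos x)\<^sup>2 + (sin x)\<^sup>2))) / c)"
  have G': "(G has_real_derivative f x) (at x)" for x
    unfolding G_def f_def by (rule Gderiv[OF s2 s1 c0])
  have fc: "continuous_on {0..pi} f" unfolding f_def by (intro continuous_intros)
  have FTC0: "interval_lebesgue_integral lborel (ereal 0) (ereal pi) f = G pi - G 0"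
    using interval_integral_FTC_finite[of 0 pi f G] fc G'
    by (simp add: has_real_derivative_iff_has_vector_derivative has_vector_derivative_at_within)
  have FTC: "(LBINT x=0..pi. f x) = G pi - G 0"
    using FTC0 by (simp add: zero_ereal_def)
  have Gv: "G pi - G 0 = (s - 1) * pi / c" unfolding G_def by simp
  have fm: "f \<in> borel_measurable lborel" unfolding f_def by measurable
  have ep: "1 / ennreal pi = ennreal (1/pi)" using divide_ennreal[of 1 pi] by simp
  have um: "uniform_measure lborel {0..pi} = density lborel (\<lambda>x. ennreal (indicator {0..pi} x / pi))"
    unfolding uniform_measure_def using ep
    by (intro density_cong) (auto simp: emeasure_lborel_Icc divide_ennreal indicator_def)
  have "(\<integral>\<nu>. \<bar>cos \<nu>\<bar> * arctan (4 * lambda0 * \<bar>cos \<nu>\<bar> / (4 * lambda0\<^sup>2 - 1))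
            \<partial>(uniform_measure lborel {0..pi})) = (\<integral>x. f x \<partial>(uniform_measure lborel {0..pi}))"
    using feq by simp
  also have "\<dots> = (\<integral>x. f x \<partial>density lborel (\<lambda>x. ennreal (indicator {0..pi} x / pi)))"
    by (simp only: um)
  also have "(\<integral>x. f x \<partial>density lborel (\<lambda>x. ennreal (indicator {0..pi} x / pi))) =
      (\<integral>x. (indicator {0..pi} x / pi) *\<^sub>R f x \<partial>lborel)"
    by (rule integral_density) (use fm in auto)
  also have "\<dots> = (LBINT x:{0..pi}. f x) / pi"
    unfolding set_lebesgue_integral_def divide_inverse by (subst mult.commute, subst integral_mult_left_zero[symmetric]) (simp add: mult_ac)
  also have "\<dots> = (s - 1) / c"
    using FTC0 Gv interval_integral_Icc[of 0 pi f] by simp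
  also have "\<dots> = - 2 * lambda0"
  proof -
    define e where "e = 1 - 4 * lambda0\<^sup>2"
    have ep: "e > 0" using d e_def by simp
    have "s - 1 = 8 * lambda0\<^sup>2 / e" unfolding s_def e_def[symmetric] using ep
      by (simp add: field_simps e_def)
    moreover have "c = - (4 * lambda0) / e" unfolding c_def e_def
      by (metis minus_diff_eq minus_divide_divide minus_divide_left)
    ultimately have "(s - 1) / c = (8 * lambda0\<^sup>2 / e) / (- (4 * lambda0) / e)" by simp
    also have "\<dots> = - 2 * lambda0" using ep assms(1) by (simp add: field_simps power2_eq_square)
    finally show ?thesis .
  qed
  finally show ?thesis .
qed
end
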